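(* Let $V$ be an $\mathcal{H}$-module vertex algebra. Set $L_1^{+}V=\sum_{n\ge1}L_1^{(n)}V$ and $L_{-1}^{+}V=\sum_{n\ge1}L_{-1}^{(n)}V$ (both $\mathbb{Z}$-graded subspaces of $V$), and denote by $(\cdot)_0$ their degree-zero parts. Then $(L_{-1}^{+}V)_0\subset (L_1^{+}V)_0$.
   Context: Throughout, $\mathbb{F}$ is an algebraically closed field of odd prime characteristic $p$; vertex algebras are over $\mathbb{F}$. Every vertex algebra $V$ is a module for the bialgebra $\mathcal{B}$ with basis $\{\mathcal{D}^{(n)}\}_{n\in\mathbb{N}}$, $\mathcal{D}^{(m)}\mathcal{D}^{(n)}=\binom{m+n}{n}\mathcal{D}^{(m+n)}$, via $\mathcal{D}^{(n)}v=v_{-n-1}\mathbf{1}$. $\mathcal{H}$: let $\mathfrak{sl}_2$ over $\mathbb{C}$ have basis $L_{-1},L_0,L_1$ with $[L_1,L_{-1}]=2L_0$, $[L_0,L_{\pm1}]=\mp L_{\pm1}$; put $L_{\pm1}^{(n)}=L_{\pm1}^n/n!$, $L_0^{(n)}=\binom{-2L_0}{n}$ in $U(\mathfrak{sl}_2)$; $U(\mathfrak{sl}_2)_{\mathbb{Z}}$ is the $\mathbb{Z}$-span of the $L_{-1}^{(i)}L_0^{(j)}L_1^{(k)}$, and $\mathcal{H}=\mathbb{F}\otimes_{\mathbb{Z}}U(\mathfrak{sl}_2)_{\mathbb{Z}}$. $e^{zL_{\pm1}}=\sum_{n\ge0}z^nL_{\pm1}^{(n)}$. For $v$ homogeneous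 of degree $n$, $f(z)^{\deg}v:=f(z)^nv$, extended linearly. A $\mathbb{Z}$-graded vertex algebra: $V=\bigoplus V_n$, $\mathbf{1}\in V_0$, $u_rV_n\subset V_{m+n-r-1}$ for $u\in V_m$. A $\mathbb{Z}$-graded weight $\mathcal{H}$-module: $W=\bigoplus W_n$ with $\mathcal{H}$-action, $L_{\pm1}^{(r)}W_n\subset W_{n\mp r}$, $L_0^{(r)}|_{W_n}=\binom{-2n}{r}$. An $\mathcal{H}$-module vertex algebra: a $\mathbb{Z}$-graded vertex algebra $V$ which is a $\mathbb{Z}$-graded weight $\mathcal{H}$-module with $L_{-1}^{(n)}=\mathcal{D}^{(n)}$, such that $V_n=0$ for $n\ll0$, $L_1^{(n)}\mathbf{1}=\delta_{n,0}\mathbf{1}$, and $e^{zL_1}Y(v,z_0)e^{-zL_1}=Y\bigl(e^{z(1-zz_0)L_1}(1-zz_0)^{-2\deg}v,z_0/(1-zz_0)\bigr)$ for $v\in V$. *)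

theory Defs
  imports "HOL-Computational_Algebra.Polynomial"
begin

text \<open>Integer binomial coefficient binom(r,i) for an integer upper argument r,
  i.e. r(r-1)...(r-i+1)/i!, which is an integer.\<close>
definition ibinom :: "int \<Rightarrow> nat \<Rightarrow> int" where
  "ibinom r i = (if 0 \<le> r then int (nat r choose i)
                 else (-1) ^ i * int (nat (- r) + i - 1 choose i))"

text \<open>A vertex algebra over the field 'a on the vector space 'v (scalar multiplication sc),
  given by the products u_r v = Y u r v and the vacuum vac. Axioms: bilinearity,
  truncation, vacuum axioms and the Borcherds (Jacobi) identity in components
  (all sums are finite; we require equality of the stabilised partial sums).\<close>
definition vertex_algebra ::
  "('a::field \<Rightarrow> 'v::ab_group_add \<Rightarrow> 'v) \<Rightarrow> ('v \<Rightarrow> int \<Rightarrow> 'v \<Rightarrow> 'v) \<Rightarrow> 'v \<Rightarrow> bool" where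
  "vertex_algebra sc Y vac \<longleftrightarrow>
     vector_space sc \<and>
     (\<forall>u r. Vector_Spaces.linear sc sc (Y u r)) \<and>
     (\<forall>r v. Vector_Spaces.linear sc sc (\<lambda>u. Y u r v)) \<and>
     (\<forall>u v. \<exists>N. \<forall>r\<ge>N. Y u r v = 0) \<and>
     (\<forall>r v. Y vac r v = (if r = -1 then v else 0)) \<and>
     (\<forall>v r. r \<ge> 0 \<longrightarrow> Y v r vac = 0) \<and>
     (\<forall>v. Y v (-1) vac = v) \<and>
     (\<forall>u v w m n r. \<exists>N. \<forall>M\<ge>N.
        (\<Sum>i\<le>M. sc (of_int (ibinom m i)) (Y (Y u (r + int i) v) (m + n - int i) w))
      = (\<Sum>i\<le>M. sc (of_int ((-1) ^ i * ibinom r i))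
            (Y u (m + r - int i) (Y v (n + int i) w)
             - sc (of_int ((-1) ^ nat \<bar>r\<bar>)) (Y v (n + r - int i) (Y u (m + int i) w)))))"

definition Dop :: "('v \<Rightarrow> int \<Rightarrow> 'v \<Rightarrow> 'v) \<Rightarrow> 'v \<Rightarrow> nat \<Rightarrow> 'v \<Rightarrow> 'v" where
  "Dop Y vac n v = Y v (- int n - 1) vac"

definition graded_space ::
  "('a::field \<Rightarrow> 'v::ab_group_add \<Rightarrow> 'v) \<Rightarrow> (int \<Rightarrow> 'v set) \<Rightarrow> bool" where
  "graded_space sc Vg \<longleftrightarrow>
     (\<forall>n. module.subspace sc (Vg n)) \<and>
     (\<forall>v. \<exists>!c::int \<Rightarrow> 'v. finite {n. c n \<noteq> 0} \<and> (\<forall>n. c n \<in> Vg n) \<and>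
            v = (\<Sum>n\<in>{n. c n \<noteq> 0}. c n))"

definition graded_vertex_algebra ::
  "('a::field \<Rightarrow> 'v::ab_group_add \<Rightarrow> 'v) \<Rightarrow> ('v \<Rightarrow> int \<Rightarrow> 'v \<Rightarrow> 'v) \<Rightarrow> 'v \<Rightarrow> (int \<Rightarrow> 'v set) \<Rightarrow> bool" where
  "graded_vertex_algebra sc Y vac Vg \<longleftrightarrow>
     vertex_algebra sc Y vac \<and> graded_space sc Vg \<and> vac \<in> Vg 0 \<and>
     (\<forall>m n u v r. u \<in> Vg m \<longrightarrow> v \<in> Vg n \<longrightarrow> Y u r v \<in> Vg (m + n - r - 1))"

text \<open>Z-graded weight H-module structure on the graded space (sc, Vg):
  Lm n is the action of L_{-1}^(n), Lp n the action of L_1^(n); L_0^(r) acts on Vg n by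
  the scalar binom(-2n, r). The H-module axioms are expressed by the defining relations
  of the hyperalgebra H = F \<otimes> U(sl_2)_Z on a weight module: divided power relations
  for L_{\<plusminus>1} and the Kostant straightening relation
  L_{-1}^(a) L_1^(b) = \<Sum>_k (-1)^k binom(-2L_0 ... ) L_1^(b-k) L_{-1}^(a-k)
  (with sl_2-triple e = L_{-1}, f = -L_1, h = 2L_0), evaluated on Vg n.\<close>
definition graded_weight_H_module ::
  "('a::field \<Rightarrow> 'v::ab_group_add \<Rightarrow> 'v) \<Rightarrow> (int \<Rightarrow> 'v set) \<Rightarrow>
   (nat \<Rightarrow> 'v \<Rightarrow> 'v) \<Rightarrow> (nat \<Rightarrow> 'v \<Rightarrow> 'v) \<Rightarrow> bool" where
  "graded_weight_H_module sc Vg Lm Lp \<longleftrightarrow>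
     graded_space sc Vg \<and>
     (\<forall>r. Vector_Spaces.linear sc sc (Lm r)) \<and> (\<forall>r. Vector_Spaces.linear sc sc (Lp r)) \<and>
     (\<forall>v. Lm 0 v = v) \<and> (\<forall>v. Lp 0 v = v) \<and>
     (\<forall>a b v. Lm a (Lm b v) = sc (of_nat ((a + b) choose b)) (Lm (a + b) v)) \<and>
     (\<forall>a b v. Lp a (Lp b v) = sc (of_nat ((a + b) choose b)) (Lp (a + b) v)) \<and>
     (\<forall>r n v. v \<in> Vg n \<longrightarrow> Lm r v \<in> Vg (n + int r)) \<and>
     (\<forall>r n v. v \<in> Vg n \<longrightarrow> Lp r v \<in> Vg (n - int r)) \<and>
     (\<forall>a b n v. v \<in> Vg n \<longrightarrow>
        Lm a (Lp b v) = (\<Sum>k\<le>min a b.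
          sc (of_int ((-1) ^ k * ibinom (2 * n + int a - int b) k)) (Lp (b - k) (Lm (a - k) v))))"

text \<open>The conjugation formula
  e^{zL_1} Y(v,z_0) e^{-zL_1} = Y(e^{z(1-zz_0)L_1}(1-zz_0)^{-2deg} v, z_0/(1-zz_0))
  is stated through the coefficient of z^N z_0^{-s-1} applied to w, for v homogeneous
  of degree d:
  \<Sum>_{a+b=N} (-1)^b L_1^(a) v_s L_1^(b) w = \<Sum>_{k=0}^N (-1)^k binom(s+N+1-2d, k) (L_1^(N-k) v)_{s+k} w.\<close>
definition H_module_vertex_algebra ::
  "('a::field \<Rightarrow> 'v::ab_group_add \<Rightarrow> 'v) \<Rightarrow> ('v \<Rightarrow> int \<Rightarrow> 'v \<Rightarrow> 'v) \<Rightarrow> 'v \<Rightarrow> (int \<Rightarrow> 'v set) \<Rightarrow>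
   (nat \<Rightarrow> 'v \<Rightarrow> 'v) \<Rightarrow> (nat \<Rightarrow> 'v \<Rightarrow> 'v) \<Rightarrow> bool" where
  "H_module_vertex_algebra sc Y vac Vg Lm Lp \<longleftrightarrow>
     graded_vertex_algebra sc Y vac Vg \<and>
     graded_weight_H_module sc Vg Lm Lp \<and>
     (\<forall>n v. Lm n v = Dop Y vac n v) \<and>
     (\<exists>N. \<forall>n<N. Vg n = {0}) \<and>
     (\<forall>n. Lp n vac = (if n = 0 then vac else 0)) \<and>
     (\<forall>d v. v \<in> Vg d \<longrightarrow> (\<forall>N s w.
        (\<Sum>a\<le>N. sc (of_int ((-1) ^ (N - a))) (Lp a (Y v s (Lp (N - a) w))))
      = (\<Sum>k\<le>N. sc (of_int ((-1) ^ k * ibinom (s + int N + 1 - 2 * d) k))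
                    (Y (Lp (N - k) v) (s + int k) w))))"

definition plus_part ::
  "('a::field \<Rightarrow> 'v::ab_group_add \<Rightarrow> 'v) \<Rightarrow> (nat \<Rightarrow> 'v \<Rightarrow> 'v) \<Rightarrow> 'v set" where
  "plus_part sc T = module.span sc (\<Union>n\<in>{1..}. range (T n))"

end

theory Submission
  imports Defs
begin

lemma lin_add: "Vector_Spaces.linear s1 s2 f \<Longrightarrow> f (x + y) = f x + f y"
  by (simp add: Vector_Spaces.linear_iff)

lemma lin_scale: "Vector_Spaces.linear s1 s2 f \<Longrightarrow> f (s1 c x) = s2 c (f x)"
  by (simp add: Vector_Spaces.linear_iff)

lemma lin_additive: "Vector_Spaces.linear s1 s2 f \<Longrightarrow> additive f"
  by (simp add: Vector_Spaces.linear_iff additive_def)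

lemma lin_zero: "Vector_Spaces.linear s1 s2 f \<Longrightarrow> f 0 = 0"
  using lin_additive additive.zero by blast

lemma lin_sum: "Vector_Spaces.linear s1 s2 f \<Longrightarrow> f (sum g A) = (\<Sum>x\<in>A. f (g x))"
  using lin_additive additive.sum by blast

definition gproj :: "(int \<Rightarrow> 'v::ab_group_add set) \<Rightarrow> 'v \<Rightarrow> int \<Rightarrow> 'v" where
  "gproj Vg v = (THE c. finite {n. c n \<noteq> 0} \<and> (\<forall>n. c n \<in> Vg n) \<and>
            v = (\<Sum>n\<in>{n. c n \<noteq> 0}. c n))"

definition gdec :: "(int \<Rightarrow> 'v::ab_group_add set) \<Rightarrow> 'v \<Rightarrow> (int \<Rightarrow> 'v) \<Rightarrow> bool" where
  "gdec Vg v c \<longleftrightarrow> finite {n. c n \<noteq> 0} \<and> (\<forall>n. c n \<in> Vg n) \<and>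
            v = (\<Sum>n\<in>{n. c n \<noteq> 0}. c n)"

lemma gproj_alt: "gproj Vg v = (THE c. gdec Vg v c)"
  unfolding gproj_def gdec_def ..

lemma gdec_ex1: "graded_space sc Vg \<Longrightarrow> \<exists>!c. gdec Vg v c"
  unfolding graded_space_def gdec_def by blast

lemma gproj_prop:
  assumes "graded_space sc Vg"
  shows "finite {n. gproj Vg v n \<noteq> 0} \<and> (\<forall>n. gproj Vg v n \<in> Vg n) \<and>
            v = (\<Sum>n\<in>{n. gproj Vg v n \<noteq> 0}. gproj Vg v n)"
proof -
  have "gdec Vg v (THE c. gdec Vg v c)" by (rule theI'[OF gdec_ex1[OF assms]])
  then show ?thesis unfolding gproj_alt gdec_def .
qed

lemma gproj_unique:
  assumes "graded_space sc Vg" and "finite F" and "\<And>n. c n \<in> Vg n"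
    and "\<And>n. n \<notin> F \<Longrightarrow> c n = 0" and "v = sum c F"
  shows "gproj Vg v = c"
proof -
  have sub: "{n. c n \<noteq> 0} \<subseteq> F" using assms(4) by blast
  have fin: "finite {n. c n \<noteq> 0}" using sub assms(2) finite_subset by blast
  have "sum c F = sum c {n. c n \<noteq> 0}"
    by (rule sum.mono_neutral_right[OF assms(2) sub]) auto
  then have P: "gdec Vg v c"
    using fin assms(3,5) by (auto simp: gdec_def)
  show ?thesis unfolding gproj_alt
    using gdec_ex1[OF assms(1), of v] P by (metis the1_equality)
qed

lemma gproj_sum:
  assumes "graded_space sc Vg"
  shows "v = sum (gproj Vg v) {n. gproj Vg v n \<noteq> 0}"
  using gproj_prop[OF assms] by blast

lemma gproj_homog:
  assumes "graded_space sc Vg" "vector_space sc" "v \<in> Vg d"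
  shows "gproj Vg v e = (if e = d then v else 0)"
proof -
  interpret module sc using assms(2) by (simp add: module_iff_vector_space)
  have "gproj Vg v = (\<lambda>n. if n = d then v else 0)"
    apply (rule gproj_unique[OF assms(1), of "{d}"])
    using assms(1,3) by (auto simp: graded_space_def subspace_0)
  then show ?thesis by simp
qed

lemma gproj_add:
  assumes "graded_space sc Vg" "vector_space sc"
  shows "gproj Vg (u + v) e = gproj Vg u e + gproj Vg v e"
proof -
  interpret module sc using assms(2) by (simp add: module_iff_vector_space)
  let ?F = "{n. gproj Vg u n \<noteq> 0} \<union> {n. gproj Vg v n \<noteq> 0}"
  have fin: "finite ?F" using gproj_prop[OF assms(1)] by blast
  have su: "sum (gproj Vg u) ?F = u"
    by (subst gproj_sum[OF assms(1), of u], rule sum.mono_neutral_left[symmetric]) (use fin in auto)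
  have sv: "sum (gproj Vg v) ?F = v"
    by (subst gproj_sum[OF assms(1), of v], rule sum.mono_neutral_left[symmetric]) (use fin in auto)
  have "gproj Vg (u + v) = (\<lambda>n. gproj Vg u n + gproj Vg v n)"
    apply (rule gproj_unique[OF assms(1) fin])
    using gproj_prop[OF assms(1)] assms(1) su sv
    by (auto simp: graded_space_def subspace_add sum.distrib)
  then show ?thesis by simp
qed

lemma gproj_scale:
  assumes "graded_space sc Vg" "vector_space sc"
  shows "gproj Vg (sc a v) e = sc a (gproj Vg v e)"
proof -
  interpret module sc using assms(2) by (simp add: module_iff_vector_space)
  let ?F = "{n. gproj Vg v n \<noteq> 0}"
  have fin: "finite ?F" using gproj_prop[OF assms(1)] by blast
  have sub: "\<And>n. module.subspace sc (Vg n)" using assms(1) unfolding graded_space_def by blast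
  have "gproj Vg (sc a v) = (\<lambda>n. sc a (gproj Vg v n))"
  proof (rule gproj_unique[OF assms(1) fin])
    fix n show "sc a (gproj Vg v n) \<in> Vg n"
      using subspace_scale[OF sub] gproj_prop[OF assms(1), of v] by blast
  next
    fix n assume "n \<notin> ?F" then show "sc a (gproj Vg v n) = 0" by simp
  next
    have "sc a v = sc a (sum (gproj Vg v) ?F)" using gproj_sum[OF assms(1), of v] by simp
    also have "\<dots> = (\<Sum>n\<in>?F. sc a (gproj Vg v n))" by (rule scale_sum_right)
    finally show "sc a v = (\<Sum>n\<in>?F. sc a (gproj Vg v n))" .
  qed
  then show ?thesis by simp
qed

lemma gproj_shift:
  assumes "graded_space sc Vg" "vector_space sc" "Vector_Spaces.linear sc sc f"
    and "\<And>n v. v \<in> Vg n \<Longrightarrow> f v \<in> Vg (n + k)"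
  shows "gproj Vg (f u) e = f (gproj Vg u (e - k))"
proof -
  let ?S = "{n. gproj Vg u n \<noteq> 0}"
  let ?F = "(\<lambda>n. n + k) ` ?S"
  have fin: "finite ?F" using gproj_prop[OF assms(1)] by blast
  have "sum (\<lambda>d. f (gproj Vg u (d - k))) ?F = sum (\<lambda>n. f (gproj Vg u n)) ?S"
    by (subst sum.reindex) (auto simp: inj_on_def)
  also have "\<dots> = f (sum (gproj Vg u) ?S)"
    by (rule lin_sum[OF assms(3), symmetric])
  also have "\<dots> = f u"
    using gproj_sum[OF assms(1), of u] by simp
  finally have s: "sum (\<lambda>d. f (gproj Vg u (d - k))) ?F = f u" .
  have "gproj Vg (f u) = (\<lambda>d. f (gproj Vg u (d - k)))"
  proof (rule gproj_unique[OF assms(1) fin])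
    fix n
    have "gproj Vg u (n - k) \<in> Vg (n - k)" using gproj_prop[OF assms(1), of u] by blast
    then have "f (gproj Vg u (n - k)) \<in> Vg (n - k + k)" by (rule assms(4))
    then show "f (gproj Vg u (n - k)) \<in> Vg n" by simp
  next
    fix n assume nF: "n \<notin> ?F"
    have "gproj Vg u (n - k) = 0"
    proof (rule ccontr)
      assume "gproj Vg u (n - k) \<noteq> 0"
      then have "n - k \<in> ?S" by simp
      then have "(n - k) + k \<in> ?F" by (rule imageI)
      then show False using nF by simp
    qed
    then show "f (gproj Vg u (n - k)) = 0" using lin_zero[OF assms(3)] by simp
  next
    show "f u = (\<Sum>d\<in>?F. f (gproj Vg u (d - k)))" using s by simp
  qed
  then show ?thesis by simp
qed

theorem lemma4p9:
  fixes sc :: "'a::alg_closed_field \<Rightarrow> 'v::ab_group_add \<Rightarrow> 'v"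
    and Y :: "'v \<Rightarrow> int \<Rightarrow> 'v \<Rightarrow> 'v" and vac :: 'v
    and Vg :: "int \<Rightarrow> 'v set" and Lm Lp :: "nat \<Rightarrow> 'v \<Rightarrow> 'v"
    and p :: nat
  assumes "prime p" and "odd p" and "CHAR('a) = p"
    and "H_module_vertex_algebra sc Y vac Vg Lm Lp"
  shows "plus_part sc Lm \<inter> Vg 0 \<subseteq> plus_part sc Lp \<inter> Vg 0"
proof -
  let ?S = "plus_part sc Lp"
  obtain GVA HW LmDop lowb Lpvac0 conj0 where
      GVA: "graded_vertex_algebra sc Y vac Vg"
      and HW: "graded_weight_H_module sc Vg Lm Lp"
      and LmDop: "\<forall>n v. Lm n v = Dop Y vac n v"
      and lowb: "\<exists>N. \<forall>n<N. Vg n = {0}"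
      and Lpvac0: "\<forall>n. Lp n vac = (if n = 0 then vac else 0)"
      and conj0: "\<forall>d v. v \<in> Vg d \<longrightarrow> (\<forall>N s w.
        (\<Sum>a\<le>N. sc (of_int ((-1) ^ (N - a))) (Lp a (Y v s (Lp (N - a) w))))
      = (\<Sum>k\<le>N. sc (of_int ((-1) ^ k * ibinom (s + int N + 1 - 2 * d) k))
                    (Y (Lp (N - k) v) (s + int k) w)))"
    using assms(4) unfolding H_module_vertex_algebra_def by (elim conjE) assumption
  obtain VA GS where VA: "vertex_algebra sc Y vac" and GS: "graded_space sc Vg"
    using GVA unfolding graded_vertex_algebra_def by (elim conjE) assumption
  have vs: "vector_space sc" using VA unfolding vertex_algebra_def by (elim conjE) assumption
  interpret module sc using vs by (simp add: module_iff_vector_space)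
  obtain GS' linLm linLp Lm0 Lp0' a1 a2 LmV' LpV' a3 where
      "graded_space sc Vg" and linLm: "\<forall>r. Vector_Spaces.linear sc sc (Lm r)"
      and linLp': "\<forall>r. Vector_Spaces.linear sc sc (Lp r)"
      and "\<forall>v. Lm 0 v = v" and Lp0': "\<forall>v. Lp 0 v = v"
      and "\<forall>a b v. Lm a (Lm b v) = sc (of_nat ((a + b) choose b)) (Lm (a + b) v)"
      and "\<forall>a b v. Lp a (Lp b v) = sc (of_nat ((a + b) choose b)) (Lp (a + b) v)"
      and LmV': "\<forall>r n v. v \<in> Vg n \<longrightarrow> Lm r v \<in> Vg (n + int r)"
      and LpV': "\<forall>r n v. v \<in> Vg n \<longrightarrow> Lp r v \<in> Vg (n - int r)"
      and "\<forall>a b n v. v \<in> Vg n \<longrightarrow>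
        Lm a (Lp b v) = (\<Sum>k\<le>min a b.
          sc (of_int ((-1) ^ k * ibinom (2 * n + int a - int b) k)) (Lp (b - k) (Lm (a - k) v)))"
    using HW unfolding graded_weight_H_module_def by (elim conjE) assumption
  have linLm: "\<And>r. Vector_Spaces.linear sc sc (Lm r)" using linLm by blast
  have linLp: "\<And>r. Vector_Spaces.linear sc sc (Lp r)" using linLp' by blast
  have Lp0: "\<And>v. Lp 0 v = v" using Lp0' by blast
  have LmV: "\<And>r n v. v \<in> Vg n \<Longrightarrow> Lm r v \<in> Vg (n + int r)" using LmV' by blast
  have LpV: "\<And>r n v. v \<in> Vg n \<Longrightarrow> Lp r v \<in> Vg (n - int r)" using LpV' by blast
  have LmD: "\<And>n v. Lm n v = Y v (- int n - 1) vac"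
    using LmDop by (simp add: Dop_def)
  obtain N0 where N0: "\<And>n. n < N0 \<Longrightarrow> Vg n = {0}"
    using lowb by blast
  have Lpvac: "\<And>n. Lp n vac = (if n = 0 then vac else 0)"
    using Lpvac0 by blast
  have conj: "\<And>d v N s w. v \<in> Vg d \<Longrightarrow>
        (\<Sum>a\<le>N. sc (of_int ((-1) ^ (N - a))) (Lp a (Y v s (Lp (N - a) w))))
      = (\<Sum>k\<le>N. sc (of_int ((-1) ^ k * ibinom (s + int N + 1 - 2 * d) k))
                    (Y (Lp (N - k) v) (s + int k) w))"
    using conj0 by blast
  have YlinR0: "\<forall>u r. Vector_Spaces.linear sc sc (Y u r)"
    using VA unfolding vertex_algebra_def by (elim conjE) assumption
  have YlinR: "\<And>u r. Vector_Spaces.linear sc sc (Y u r)" using YlinR0 by blast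
  have Ssub: "subspace ?S" by (simp add: plus_part_def)
  have Sbase: "\<And>n v. 1 \<le> n \<Longrightarrow> Lp n v \<in> ?S"
    unfolding plus_part_def by (rule span_base) auto

  have step: "Lm n w \<in> ?S"
    if n1: "1 \<le> n" and w: "w \<in> Vg (- int n)"
      and IH: "\<And>n' w'. n < n' \<Longrightarrow> w' \<in> Vg (- int n') \<Longrightarrow> Lm n' w' \<in> ?S" for n w
  proof -
    define s where "s = - int (2 * n) - 1"
    have F: "(\<Sum>a\<le>n. sc (of_int ((-1) ^ (n - a))) (Lp a (Y w s (Lp (n - a) vac))))
      = (\<Sum>k\<le>n. sc (of_int ((-1) ^ k * ibinom (s + int n + 1 - 2 * (- int n)) k))
                    (Y (Lp (n - k) w) (s + int k) vac))"
      by (rule conj[OF w])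
    have atm: "{..n} = insert n {..<n}" by auto
    have "(\<Sum>a\<le>n. sc (of_int ((-1) ^ (n - a))) (Lp a (Y w s (Lp (n - a) vac))))
        = Lp n (Lm (2 * n) w)"
    proof -
      have z: "(\<Sum>a<n. sc (of_int ((-1) ^ (n - a))) (Lp a (Y w s (Lp (n - a) vac)))) = 0"
      proof (rule sum.neutral, intro ballI)
        fix a assume "a \<in> {..<n}"
        then have "Lp (n - a) vac = 0" using Lpvac by simp
        then show "sc (of_int ((-1) ^ (n - a))) (Lp a (Y w s (Lp (n - a) vac))) = 0"
          using lin_zero[OF YlinR] lin_zero[OF linLp] by simp
      qed
      have "Y w s vac = Lm (2 * n) w" using LmD s_def by simp
      then show ?thesis unfolding atm using z Lpvac by simp
    qed
    moreover have "(\<Sum>k\<le>n. sc (of_int ((-1) ^ k * ibinom (s + int n + 1 - 2 * (- int n)) k))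
                    (Y (Lp (n - k) w) (s + int k) vac))
        = sc (of_int ((-1) ^ n)) (Lm n w) +
          (\<Sum>k<n. sc (of_int ((-1) ^ k * int (n choose k))) (Lm (2 * n - k) (Lp (n - k) w)))"
    proof -
      have e: "s + int n + 1 - 2 * (- int n) = int n" using s_def by simp
      have t: "Y (Lp (n - k) w) (s + int k) vac = Lm (2 * n - k) (Lp (n - k) w)" if "k \<le> n" for k
      proof -
        have "s + int k = - int (2 * n - k) - 1" using that s_def by (simp add: of_nat_diff)
        then show ?thesis using LmD by simp
      qed
      have "(\<Sum>k<n. sc (of_int ((-1) ^ k * ibinom (s + int n + 1 - 2 * (- int n)) k))
                    (Y (Lp (n - k) w) (s + int k) vac))
          = (\<Sum>k<n. sc (of_int ((-1) ^ k * int (n choose k))) (Lm (2 * n - k) (Lp (n - k) w)))"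
        unfolding e by (rule sum.cong) (auto simp: ibinom_def t)
      moreover have "sc (of_int ((-1) ^ n * ibinom (s + int n + 1 - 2 * (- int n)) n))
                    (Y (Lp (n - n) w) (s + int n) vac) = sc (of_int ((-1) ^ n)) (Lm n w)"
        unfolding e using t[of n] by (simp add: ibinom_def Lp0)
      moreover have ins: "\<And>f. sum f {..n} = f n + sum f {..<n}" by (simp add: atm)
      ultimately show ?thesis by (simp only: ins)
    qed
    ultimately have eq0: "Lp n (Lm (2 * n) w) = sc (of_int ((-1) ^ n)) (Lm n w) +
          (\<Sum>k<n. sc (of_int ((-1) ^ k * int (n choose k))) (Lm (2 * n - k) (Lp (n - k) w)))"
      using F by simp
    have eq: "sc (of_int ((-1) ^ n)) (Lm n w) = Lp n (Lm (2 * n) w) -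
          (\<Sum>k<n. sc (of_int ((-1) ^ k * int (n choose k))) (Lm (2 * n - k) (Lp (n - k) w)))"
      unfolding eq0 by (rule add_diff_cancel_right'[symmetric])
    have "(\<Sum>k<n. sc (of_int ((-1) ^ k * int (n choose k))) (Lm (2 * n - k) (Lp (n - k) w))) \<in> ?S"
    proof (rule subspace_sum[OF Ssub])
      fix k assume k: "k \<in> {..<n}"
      have "Lp (n - k) w \<in> Vg (- int n - int (n - k))" by (rule LpV[OF w])
      moreover have "- int n - int (n - k) = - int (2 * n - k)" using k by auto
      ultimately have "Lm (2 * n - k) (Lp (n - k) w) \<in> ?S"
        using IH[of "2 * n - k"] k by auto
      then show "sc (of_int ((-1) ^ k * int (n choose k))) (Lm (2 * n - k) (Lp (n - k) w)) \<in> ?S"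
        by (rule subspace_scale[OF Ssub])
    qed
    then have "sc (of_int ((-1) ^ n)) (Lm n w) \<in> ?S"
      unfolding eq using Sbase[OF n1] subspace_diff[OF Ssub] by blast
    then have "sc (of_int ((-1) ^ n)) (sc (of_int ((-1) ^ n)) (Lm n w)) \<in> ?S"
      by (rule subspace_scale[OF Ssub])
    moreover have "((-1::int) ^ n) * (-1) ^ n = 1" by (simp flip: power_mult_distrib)
    then have "(of_int ((-1) ^ n) :: 'a) * of_int ((-1) ^ n) = 1"
      by (metis of_int_mult of_int_1)
    ultimately show ?thesis by simp
  qed

  define B where "B = nat (- N0) + 1"
  have big: "\<And>n w. B \<le> n \<Longrightarrow> w \<in> Vg (- int n) \<Longrightarrow> w = 0"
    using N0 unfolding B_def by fastforce
  have claimk: "\<forall>n w. B \<le> n + k \<longrightarrow> 1 \<le> n \<longrightarrow> w \<in> Vg (- int n) \<longrightarrow> Lm n w \<in> ?S" for k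
  proof (induction k)
    case 0
    show ?case
    proof (intro allI impI)
      fix n w assume a: "B \<le> n + 0" "1 \<le> n" "w \<in> Vg (- int n)"
      then have "w = 0" using big by simp
      then show "Lm n w \<in> ?S" using lin_zero[OF linLm] subspace_0[OF Ssub] by simp
    qed
  next
    case (Suc k)
    show ?case
    proof (intro allI impI)
      fix n w assume a: "B \<le> n + Suc k" "1 \<le> n" "w \<in> Vg (- int n)"
      show "Lm n w \<in> ?S"
      proof (rule step[OF a(2,3)])
        fix n' w' assume "n < n'" "w' \<in> Vg (- int n')"
        then show "Lm n' w' \<in> ?S" using Suc.IH a(1,2) by auto
      qed
    qed
  qed
  have claim: "\<And>n w. 1 \<le> n \<Longrightarrow> w \<in> Vg (- int n) \<Longrightarrow> Lm n w \<in> ?S"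
    using claimk[of B] by auto

  have proj0: "gproj Vg y 0 \<in> ?S" if y: "y \<in> plus_part sc Lm" for y
  proof -
    have "y \<in> span (\<Union>n\<in>{1..}. range (Lm n))" using y by (simp add: plus_part_def)
    then show ?thesis
    proof (induction rule: span_induct)
      case base
      show ?case unfolding subspace_def
      proof (intro conjI ballI allI)
        have "gproj Vg 0 0 = (0::'v)"
          using gproj_homog[OF GS vs, of 0 0] GS
          by (simp add: graded_space_def subspace_0)
        then show "0 \<in> {y. gproj Vg y 0 \<in> ?S}" using subspace_0[OF Ssub] by simp
      next
        fix x y assume "x \<in> {y. gproj Vg y 0 \<in> ?S}" "y \<in> {y. gproj Vg y 0 \<in> ?S}"
        then show "x + y \<in> {y. gproj Vg y 0 \<in> ?S}"
          using gproj_add[OF GS vs] subspace_add[OF Ssub] by simp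
      next
        fix c x assume "x \<in> {y. gproj Vg y 0 \<in> ?S}"
        then show "sc c x \<in> {y. gproj Vg y 0 \<in> ?S}"
          using gproj_scale[OF GS vs] subspace_scale[OF Ssub] by simp
      qed
    next
      case (step x)
      then obtain n u where nu: "1 \<le> n" "x = Lm n u" by auto
      have "gproj Vg (Lm n u) 0 = Lm n (gproj Vg u (0 - int n))"
        by (rule gproj_shift[OF GS vs linLm LmV])
      moreover have "gproj Vg u (0 - int n) \<in> Vg (- int n)"
        using gproj_prop[OF GS, of u] by simp
      ultimately show ?case using claim[OF nu(1)] nu(2) by simp
    qed
  qed
  show ?thesis
  proof
    fix x assume x: "x \<in> plus_part sc Lm \<inter> Vg 0"
    then have "gproj Vg x 0 = x" using gproj_homog[OF GS vs, of x 0 0] by simp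
    then show "x \<in> ?S \<inter> Vg 0" using proj0[of x] x by auto
  qed
qed

end
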